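(* Assume that the exact relative presentation $X_\infty$ satisfies a linear isoperimetric inequality of factor $K$. If $s\in S$ represents an element $a\in H_i$, then $\|a\|\le 12K$, i.e. the word length of $a$ with respect to $S_i$ is at most $12K$.
   Context: Setting. $G=\langle S\mid\mathcal R\rangle$ is a finite presentation with $S$ finite symmetric and relators of length 2 or 3. $H_1,\dots,H_n\le G$, and $S_i\subset S$ is a finite symmetric generating set of $H_i$. $X_\infty$ has generating set $\hat S=S\sqcup H_1\sqcup\dots\sqcup H_n$ (every element of every $H_i$ is a letter) and relators: - the words of $\mathcal R$; - the words $\tilde s^{-1}s$ for $s\in S_i$, where $\tilde s$ is the letter of $H_i$ corresponding to $s$; - for each $i$, all words of at most 3 letters of $H_i$ whose product is trivial in $H_i$. $X_\infty$ satisfies a linear isoperimetric inequality of factor $K$ if every word $w$ over $\hat S$ trivial in $G$ has a Van Kampen diagram over $X_\infty$ with at most $K\,\mathrm{length}(w)$ 2-cells. For $a\in H_i$, the complexity $\|a\|$ is the word length of $a$ with respect to $S_i$. *)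

theory Defs
  imports "HOL-Algebra.Algebra"
begin

text \<open>Signed words: a pair (x, True) is the letter x, (x, False) its formal inverse.\<close>

definition inv_word :: "('a \<times> bool) list \<Rightarrow> ('a \<times> bool) list" where
  "inv_word w = rev (map (\<lambda>(x, b). (x, \<not> b)) w)"

definition free_red_step :: "('a \<times> bool) list \<Rightarrow> ('a \<times> bool) list \<Rightarrow> bool" where
  "free_red_step u v \<longleftrightarrow> (\<exists>p q x b. u = p @ [(x, b), (x, \<not> b)] @ q \<and> v = p @ q)"

definition free_eq :: "('a \<times> bool) list \<Rightarrow> ('a \<times> bool) list \<Rightarrow> bool" where
  "free_eq = (sup free_red_step free_red_step\<inverse>\<inverse>)\<^sup>*\<^sup>*"

definition conj_prod :: "(('a \<times> bool) list \<times> ('a \<times> bool) list \<times> bool) list \<Rightarrow> ('a \<times> bool) list" where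
  "conj_prod cs = concat (map (\<lambda>(u, r, e). u @ (if e then r else inv_word r) @ inv_word u) cs)"

text \<open>w admits a Van Kampen diagram over the relators Rel with at most N 2-cells
  (algebraic form of van Kampen's lemma: w is freely equal to a product of at most
  N conjugates of relators and their inverses).\<close>
definition has_vk_diagram :: "('a \<times> bool) list set \<Rightarrow> ('a \<times> bool) list \<Rightarrow> nat \<Rightarrow> bool" where
  "has_vk_diagram Rel w N \<longleftrightarrow>
     (\<exists>cs. length cs \<le> N \<and> (\<forall>(u, r, e) \<in> set cs. r \<in> Rel) \<and> free_eq w (conj_prod cs))"

definition word_eval :: "('g, 'm) monoid_scheme \<Rightarrow> ('a \<Rightarrow> 'g) \<Rightarrow> ('a \<times> bool) list \<Rightarrow> 'g" where
  "word_eval G f w = foldr (\<lambda>(x, b) acc. (if b then f x else inv\<^bsub>G\<^esub> (f x)) \<otimes>\<^bsub>G\<^esub> acc) w \<one>\<^bsub>G\<^esub>"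

definition symmetric_alph :: "('g, 'm) monoid_scheme \<Rightarrow> ('s \<Rightarrow> 'g) \<Rightarrow> 's set \<Rightarrow> bool" where
  "symmetric_alph G \<iota> A \<longleftrightarrow> (\<forall>s\<in>A. \<exists>t\<in>A. \<iota> t = inv\<^bsub>G\<^esub> (\<iota> s))"

definition is_presentation ::
  "('g, 'm) monoid_scheme \<Rightarrow> ('s \<Rightarrow> 'g) \<Rightarrow> 's set \<Rightarrow> ('s \<times> bool) list set \<Rightarrow> bool" where
  "is_presentation G \<iota> S R \<longleftrightarrow>
     \<iota> ` S \<subseteq> carrier G \<and> generate G (\<iota> ` S) = carrier G \<and>
     R \<subseteq> lists (S \<times> UNIV) \<and>
     (\<forall>w \<in> lists (S \<times> UNIV). word_eval G \<iota> w = \<one>\<^bsub>G\<^esub> \<longleftrightarrow> (\<exists>N. has_vk_diagram R w N))"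

definition word_length :: "('g, 'm) monoid_scheme \<Rightarrow> ('s \<Rightarrow> 'g) \<Rightarrow> 's set \<Rightarrow> 'g \<Rightarrow> nat" where
  "word_length G \<iota> A a = (LEAST k. \<exists>ws \<in> lists A. length ws = k \<and>
      foldr (\<lambda>s acc. \<iota> s \<otimes>\<^bsub>G\<^esub> acc) ws \<one>\<^bsub>G\<^esub> = a)"

text \<open>Letters of X_infinity: S \<squnion> H_1 \<squnion> ... \<squnion> H_n.\<close>
datatype ('s, 'g) xletter = Gen 's | Sub nat 'g

fun xval :: "('s \<Rightarrow> 'g) \<Rightarrow> ('s, 'g) xletter \<Rightarrow> 'g" where
  "xval \<iota> (Gen s) = \<iota> s"
| "xval \<iota> (Sub i h) = h"

definition xletters :: "'s set \<Rightarrow> nat \<Rightarrow> (nat \<Rightarrow> 'g set) \<Rightarrow> ('s, 'g) xletter set" where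
  "xletters S n H = Gen ` S \<union> (\<Union>i\<in>{1..n}. Sub i ` H i)"

definition xrelators ::
  "('g, 'm) monoid_scheme \<Rightarrow> ('s \<Rightarrow> 'g) \<Rightarrow> ('s \<times> bool) list set \<Rightarrow> nat \<Rightarrow> (nat \<Rightarrow> 'g set)
     \<Rightarrow> (nat \<Rightarrow> 's set) \<Rightarrow> (('s, 'g) xletter \<times> bool) list set" where
  "xrelators G \<iota> R n H Ssub =
     (map (\<lambda>(s, b). (Gen s, b))) ` R
   \<union> (\<Union>i\<in>{1..n}. (\<lambda>s. [(Sub i (\<iota> s), False), (Gen s, True)]) ` Ssub i)
   \<union> (\<Union>i\<in>{1..n}. {map (\<lambda>h. (Sub i h, True)) hs | hs.
          hs \<in> lists (H i) \<and> 1 \<le> length hs \<and> length hs \<le> 3 \<and>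
          foldr (\<otimes>\<^bsub>G\<^esub>) hs \<one>\<^bsub>G\<^esub> = \<one>\<^bsub>G\<^esub>})"

definition linear_isoperimetric ::
  "('g, 'm) monoid_scheme \<Rightarrow> ('s \<Rightarrow> 'g) \<Rightarrow> 's set \<Rightarrow> ('s \<times> bool) list set \<Rightarrow> nat \<Rightarrow> (nat \<Rightarrow> 'g set)
     \<Rightarrow> (nat \<Rightarrow> 's set) \<Rightarrow> real \<Rightarrow> bool" where
  "linear_isoperimetric G \<iota> S R n H Ssub K \<longleftrightarrow>
     (\<forall>w \<in> lists (xletters S n H \<times> UNIV).
        word_eval G (xval \<iota>) w = \<one>\<^bsub>G\<^esub> \<longrightarrow>
        (\<exists>N. real N \<le> K * real (length w) \<and> has_vk_diagram (xrelators G \<iota> R n H Ssub) w N))"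

end

theory Submission
  imports Defs
begin

definition cval :: "('g, 'm) monoid_scheme \<Rightarrow> ('a \<Rightarrow> 'g) \<Rightarrow> 'a \<Rightarrow> 'g" where
  "cval G \<phi> x = (if \<phi> x \<in> carrier G then \<phi> x else \<one>\<^bsub>G\<^esub>)"

definition lval :: "('g, 'm) monoid_scheme \<Rightarrow> ('a \<Rightarrow> 'g) \<Rightarrow> 'a \<times> bool \<Rightarrow> 'g" where
  "lval G \<phi> c = (if snd c then cval G \<phi> (fst c) else inv\<^bsub>G\<^esub> (cval G \<phi> (fst c)))"

fun Lam :: "('g, 'm) monoid_scheme \<Rightarrow> ('a \<Rightarrow> 'g) \<Rightarrow> ('a \<Rightarrow> bool) \<Rightarrow> ('g \<Rightarrow> real) \<Rightarrow> 'g
   \<Rightarrow> ('a \<times> bool) list \<Rightarrow> real" where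
  "Lam G \<phi> P f p [] = 0"
| "Lam G \<phi> P f p (c # v) = (if P (fst c) then f (p \<otimes>\<^bsub>G\<^esub> lval G \<phi> c) - f p else 0)
      + Lam G \<phi> P f (p \<otimes>\<^bsub>G\<^esub> lval G \<phi> c) v"

lemma inv_word_Nil[simp]: "inv_word [] = []" by (simp add: inv_word_def)
lemma inv_word_Cons: "inv_word (c # u) = inv_word u @ [(fst c, \<not> snd c)]"
  by (cases c) (simp add: inv_word_def)

context group
begin

lemma cval_carrier[simp]: "cval G \<phi> x \<in> carrier G" by (simp add: cval_def)
lemma lval_carrier[simp]: "lval G \<phi> c \<in> carrier G" by (simp add: lval_def)
lemma lval_neg: "lval G \<phi> (x, \<not> b) = inv (lval G \<phi> (x, b))" by (simp add: lval_def)

lemma E_Nil[simp]: "word_eval G g [] = \<one>" by (simp add: word_eval_def)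
lemma E_Cons: "word_eval G (cval G \<phi>) (c # v) = lval G \<phi> c \<otimes> word_eval G (cval G \<phi>) v"
  by (cases c) (simp add: word_eval_def lval_def)
lemma E_carrier[simp]: "word_eval G (cval G \<phi>) v \<in> carrier G"
  by (induction v) (simp_all add: E_Cons)
lemma E_append: "word_eval G (cval G \<phi>) (u @ v) = word_eval G (cval G \<phi>) u \<otimes> word_eval G (cval G \<phi>) v"
  by (induction u) (simp_all add: E_Cons m_assoc)
lemma E_inv_word: "word_eval G (cval G \<phi>) (inv_word u) = inv (word_eval G (cval G \<phi>) u)"
proof (induction u)
  case Nil then show ?case by simp
next
  case (Cons c u)
  obtain x b where c: "c = (x, b)" by (cases c)
  show ?case using Cons
    by (simp add: inv_word_Cons E_append E_Cons c lval_neg inv_mult_group)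
qed

lemma Lam_append: "p \<in> carrier G \<Longrightarrow>
  Lam G \<phi> P f p (u @ v) = Lam G \<phi> P f p u + Lam G \<phi> P f (p \<otimes> word_eval G (cval G \<phi>) u) v"
  by (induction u arbitrary: p) (simp_all add: E_Cons m_assoc)

lemma Lam_pair: "p \<in> carrier G \<Longrightarrow> Lam G \<phi> P f p [(x, b), (x, \<not> b)] = 0"
  by (simp add: lval_neg m_assoc)

lemma E_pair: "word_eval G (cval G \<phi>) [(x, b), (x, \<not> b)] = \<one>"
  by (simp add: E_Cons lval_neg)

lemma Lam_red: "free_red_step u v \<Longrightarrow> p \<in> carrier G \<Longrightarrow> Lam G \<phi> P f p u = Lam G \<phi> P f p v"
proof -
  assume "free_red_step u v" and p: "p \<in> carrier G"
  then obtain a q x b where u: "u = a @ [(x, b), (x, \<not> b)] @ q" and v: "v = a @ q"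
    unfolding free_red_step_def by blast
  define p' where "p' = p \<otimes> word_eval G (cval G \<phi>) a"
  have p': "p' \<in> carrier G" using p by (simp add: p'_def)
  have "Lam G \<phi> P f p u = Lam G \<phi> P f p a + Lam G \<phi> P f p' ([(x, b), (x, \<not> b)] @ q)"
    unfolding u using Lam_append[OF p, where u=a] p'_def by presburger
  also have "Lam G \<phi> P f p' ([(x, b), (x, \<not> b)] @ q) = Lam G \<phi> P f p' q"
  proof -
    have "p' \<otimes> lval G \<phi> (x,b) \<otimes> lval G \<phi> (x, \<not> b) = p'" using p' by (simp add: lval_neg m_assoc)
    then show ?thesis using p' by (simp add: lval_neg)
  qed
  finally show ?thesis unfolding v using Lam_append[OF p, where u=a and v=q] p'_def by simp
qed

lemma Lam_free_eq: "free_eq u v \<Longrightarrow> \<forall>p\<in>carrier G. Lam G \<phi> P f p u = Lam G \<phi> P f p v"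
  unfolding free_eq_def
proof (induction rule: rtranclp_induct)
  case base then show ?case by simp
next
  case (step y z)
  then show ?case using Lam_red by (metis conversep_iff sup2E)
qed

lemma Lam_inv_word: "p \<in> carrier G \<Longrightarrow>
   Lam G \<phi> P f p (inv_word u) = - Lam G \<phi> P f (p \<otimes> inv (word_eval G (cval G \<phi>) u)) u"
proof (induction u arbitrary: p)
  case Nil then show ?case by simp
next
  case (Cons c u)
  obtain x b where c: "c = (x, b)" by (cases c)
  define U where "U = word_eval G (cval G \<phi>) u"
  define l where "l = lval G \<phi> (x, b)"
  define q where "q = p \<otimes> inv U"
  have U: "U \<in> carrier G" and l: "l \<in> carrier G" and q: "q \<in> carrier G"
    using Cons.prems by (simp_all add: U_def l_def q_def)
  have e1: "p \<otimes> inv (l \<otimes> U) = q \<otimes> inv l"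
    using U l Cons.prems by (simp add: q_def inv_mult_group m_assoc)
  have e2: "q \<otimes> inv l \<otimes> l = q" using q l by (simp add: m_assoc)
  have cneg: "lval G \<phi> (fst c, \<not> snd c) = inv l" by (simp add: c l_def lval_neg)
  have e3: "p \<otimes> inv (lval G \<phi> c \<otimes> U) \<otimes> lval G \<phi> c = q" using e1 e2 by (simp add: c l_def)
  have e4: "p \<otimes> inv (lval G \<phi> c \<otimes> U) = q \<otimes> inv l" using e1 by (simp add: c l_def)
  have "Lam G \<phi> P f p (inv_word (c # u)) = - Lam G \<phi> P f q u + Lam G \<phi> P f q [(fst c, \<not> snd c)]"
    using Cons by (simp add: inv_word_Cons Lam_append E_inv_word U_def q_def)
  also have "\<dots> = - Lam G \<phi> P f (p \<otimes> inv (lval G \<phi> c \<otimes> word_eval G (cval G \<phi>) u)) (c # u)"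
    using e3 e4 cneg by (simp add: U_def[symmetric] c)
  finally show ?case by (simp add: E_Cons)
qed

lemma Lam_block: "word_eval G (cval G \<phi>) r = \<one> \<Longrightarrow> p \<in> carrier G \<Longrightarrow>
  Lam G \<phi> P f p (u @ r @ inv_word u) = Lam G \<phi> P f (p \<otimes> word_eval G (cval G \<phi>) u) r"
  by (simp add: Lam_append Lam_inv_word E_append m_assoc)

lemma conj_bound: "(\<forall>(u, r, e) \<in> set cs. word_eval G (cval G \<phi>) r = \<one> \<and>
      (\<forall>q\<in>carrier G. \<bar>Lam G \<phi> P f q r\<bar> \<le> 1)) \<Longrightarrow> p \<in> carrier G \<Longrightarrow>
   \<bar>Lam G \<phi> P f p (conj_prod cs)\<bar> \<le> real (length cs) \<and> word_eval G (cval G \<phi>) (conj_prod cs) = \<one>"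
proof (induction cs arbitrary: p)
  case Nil then show ?case by (simp add: conj_prod_def)
next
  case (Cons c cs)
  obtain u r e where c: "c = (u, r, e)" by (cases c)
  define r' where "r' = (if e then r else inv_word r)"
  have Er: "word_eval G (cval G \<phi>) r = \<one>" and Lr: "\<forall>q\<in>carrier G. \<bar>Lam G \<phi> P f q r\<bar> \<le> 1"
    using Cons.prems c by auto
  have Er': "word_eval G (cval G \<phi>) r' = \<one>" using Er by (simp add: r'_def E_inv_word)
  have Lr': "\<bar>Lam G \<phi> P f q r'\<bar> \<le> 1" if "q \<in> carrier G" for q
    using Lr that Er by (simp add: r'_def Lam_inv_word)
  have cp: "conj_prod (c # cs) = (u @ r' @ inv_word u) @ conj_prod cs"
    by (simp add: conj_prod_def c r'_def)
  have Eb: "word_eval G (cval G \<phi>) (u @ r' @ inv_word u) = \<one>"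
    by (simp add: E_append E_inv_word Er')
  have IH: "\<bar>Lam G \<phi> P f p (conj_prod cs)\<bar> \<le> real (length cs) \<and> word_eval G (cval G \<phi>) (conj_prod cs) = \<one>"
    using Cons by auto
  have "Lam G \<phi> P f p (conj_prod (c # cs)) = Lam G \<phi> P f (p \<otimes> word_eval G (cval G \<phi>) u) r' + Lam G \<phi> P f p (conj_prod cs)"
    using Cons.prems Lam_append[where p=p and u="u @ r' @ inv_word u" and v="conj_prod cs"]
      Lam_block[OF Er', where p=p and u=u] Eb by (simp only: cp) simp
  moreover have "\<bar>Lam G \<phi> P f (p \<otimes> word_eval G (cval G \<phi>) u) r'\<bar> \<le> 1"
    using Lr' Cons.prems by simp
  ultimately have "\<bar>Lam G \<phi> P f p (conj_prod (c # cs))\<bar> \<le> real (length (c # cs))"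
    using IH by (simp add: abs_triangle_ineq[THEN order_trans])
  moreover have "word_eval G (cval G \<phi>) (conj_prod (c # cs)) = \<one>"
    unfolding cp E_append[where u="u @ r' @ inv_word u"] Eb using IH by simp
  ultimately show ?case by blast
qed

lemma Lam_zero: "\<forall>c\<in>set v. \<not> P (fst c) \<Longrightarrow> Lam G \<phi> P f p v = 0"
  by (induction v arbitrary: p) auto

lemma Lam_tele: "p \<in> carrier G \<Longrightarrow> \<forall>c\<in>set v. P (fst c) \<Longrightarrow>
   Lam G \<phi> P f p v = f (p \<otimes> word_eval G (cval G \<phi>) v) - f p"
  by (induction v arbitrary: p) (simp_all add: E_Cons m_assoc)

end

context group
begin

lemma wprod_carrier: "\<iota> ` A \<subseteq> carrier G \<Longrightarrow> ws \<in> lists A \<Longrightarrow>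
   foldr (\<lambda>s acc. \<iota> s \<otimes> acc) ws \<one> \<in> carrier G"
  by (induction ws) auto

lemma wprod_snoc: "\<iota> ` A \<subseteq> carrier G \<Longrightarrow> ws \<in> lists A \<Longrightarrow> u \<in> A \<Longrightarrow>
   foldr (\<lambda>s acc. \<iota> s \<otimes> acc) (ws @ [u]) \<one> = foldr (\<lambda>s acc. \<iota> s \<otimes> acc) ws \<one> \<otimes> \<iota> u"
  by (induction ws) (auto simp: m_assoc wprod_carrier image_subset_iff)

lemma wl_le: "ws \<in> lists A \<Longrightarrow> foldr (\<lambda>s acc. \<iota> s \<otimes> acc) ws \<one> = y \<Longrightarrow>
   word_length G \<iota> A y \<le> length ws"
  unfolding word_length_def by (rule Least_le) blast

lemma wl_ex: "ws \<in> lists A \<Longrightarrow> foldr (\<lambda>s acc. \<iota> s \<otimes> acc) ws \<one> = y \<Longrightarrow>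
   \<exists>ws'\<in>lists A. length ws' = word_length G \<iota> A y \<and> foldr (\<lambda>s acc. \<iota> s \<otimes> acc) ws' \<one> = y"
  unfolding word_length_def by (rule LeastI_ex) blast

lemma wl_step: "\<iota> ` A \<subseteq> carrier G \<Longrightarrow> u \<in> A \<Longrightarrow> ws \<in> lists A \<Longrightarrow>
   foldr (\<lambda>s acc. \<iota> s \<otimes> acc) ws \<one> = y \<Longrightarrow>
   word_length G \<iota> A (y \<otimes> \<iota> u) \<le> word_length G \<iota> A y + 1
   \<and> (\<exists>ws\<in>lists A. foldr (\<lambda>s acc. \<iota> s \<otimes> acc) ws \<one> = y \<otimes> \<iota> u)"
proof -
  assume A: "\<iota> ` A \<subseteq> carrier G" and u: "u \<in> A" and ws: "ws \<in> lists A"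
    and y: "foldr (\<lambda>s acc. \<iota> s \<otimes> acc) ws \<one> = y"
  obtain ws' where ws': "ws' \<in> lists A" "length ws' = word_length G \<iota> A y"
    "foldr (\<lambda>s acc. \<iota> s \<otimes> acc) ws' \<one> = y" using wl_ex[OF ws y] by blast
  have "foldr (\<lambda>s acc. \<iota> s \<otimes> acc) (ws' @ [u]) \<one> = y \<otimes> \<iota> u"
    using wprod_snoc[OF A ws'(1) u] ws'(3) by simp
  moreover have "ws' @ [u] \<in> lists A" using ws' u by simp
  ultimately show ?thesis using wl_le[of "ws' @ [u]" A \<iota> "y \<otimes> \<iota> u"] ws'(2) by fastforce
qed

lemma wl_lip: assumes A: "\<iota> ` A \<subseteq> carrier G" and sym: "symmetric_alph G \<iota> A"
  and t: "t \<in> A" and y: "y \<in> carrier G"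
  shows "\<bar>real (word_length G \<iota> A (y \<otimes> inv (\<iota> t))) - real (word_length G \<iota> A y)\<bar> \<le> 1"
proof -
  obtain t' where t': "t' \<in> A" "\<iota> t' = inv (\<iota> t)" using sym t unfolding symmetric_alph_def by blast
  have it: "\<iota> t \<in> carrier G" using A t by auto
  have bk: "y \<otimes> inv (\<iota> t) \<otimes> \<iota> t = y" using it y by (simp add: m_assoc)
  show ?thesis
  proof (cases "\<exists>ws\<in>lists A. foldr (\<lambda>s acc. \<iota> s \<otimes> acc) ws \<one> = y")
    case True
    then obtain ws where ws: "ws \<in> lists A" "foldr (\<lambda>s acc. \<iota> s \<otimes> acc) ws \<one> = y" by blast
    from wl_step[OF A t'(1) ws] obtain ws2 where
      s1: "word_length G \<iota> A (y \<otimes> inv (\<iota> t)) \<le> word_length G \<iota> A y + 1"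
      and ws2: "ws2 \<in> lists A" "foldr (\<lambda>s acc. \<iota> s \<otimes> acc) ws2 \<one> = y \<otimes> inv (\<iota> t)"
      using t'(2) by auto
    from wl_step[OF A t ws2] bk
    have s2: "word_length G \<iota> A y \<le> word_length G \<iota> A (y \<otimes> inv (\<iota> t)) + 1" by simp
    show ?thesis using s1 s2 by linarith
  next
    case False
    have F2: "\<not> (\<exists>ws\<in>lists A. foldr (\<lambda>s acc. \<iota> s \<otimes> acc) ws \<one> = y \<otimes> inv (\<iota> t))"
    proof
      assume "\<exists>ws\<in>lists A. foldr (\<lambda>s acc. \<iota> s \<otimes> acc) ws \<one> = y \<otimes> inv (\<iota> t)"
      then obtain ws where ws: "ws \<in> lists A" "foldr (\<lambda>s acc. \<iota> s \<otimes> acc) ws \<one> = y \<otimes> inv (\<iota> t)"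
        by blast
      from wl_step[OF A t ws] bk False show False by auto
    qed
    have "word_length G \<iota> A (y \<otimes> inv (\<iota> t)) = word_length G \<iota> A y"
      unfolding word_length_def using False F2 by metis
    then show ?thesis by simp
  qed
qed

end



lemma E_gen: "group G \<Longrightarrow> \<iota> ` S \<subseteq> carrier G \<Longrightarrow> r \<in> lists (S \<times> UNIV) \<Longrightarrow>
  word_eval G (cval G (xval \<iota>)) (map (\<lambda>(s, b). (Gen s, b)) r) = word_eval G \<iota> r"
  by (induction r) (auto simp: word_eval_def cval_def)

lemma E_sub: "set hs \<subseteq> carrier G \<Longrightarrow>
  word_eval G (cval G (xval \<iota>)) (map (\<lambda>h. (Sub j h, True)) hs) = foldr (\<otimes>\<^bsub>G\<^esub>) hs \<one>\<^bsub>G\<^esub>"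
  by (induction hs) (auto simp: word_eval_def cval_def)

theorem lemma3p4:
  fixes G :: "('g, 'm) monoid_scheme" and \<iota> :: "'s \<Rightarrow> 'g" and S :: "'s set"
    and R :: "('s \<times> bool) list set" and n :: nat and H :: "nat \<Rightarrow> 'g set"
    and Ssub :: "nat \<Rightarrow> 's set" and K :: real
  assumes "group G"
    and "finite S" and "symmetric_alph G \<iota> S"
    and "finite R" and "\<forall>r\<in>R. length r = 2 \<or> length r = 3"
    and "is_presentation G \<iota> S R"
    and "\<forall>i\<in>{1..n}. subgroup (H i) G"
    and "\<forall>i\<in>{1..n}. Ssub i \<subseteq> S \<and> symmetric_alph G \<iota> (Ssub i) \<and>
           generate G (\<iota> ` Ssub i) = H i"
    and "linear_isoperimetric G \<iota> S R n H Ssub K"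
    and "i \<in> {1..n}" and "s \<in> S" and "\<iota> s \<in> H i"
  shows "real (word_length G \<iota> (Ssub i) (\<iota> s)) \<le> 12 * K"
proof -
  interpret G: group G by (rule assms(1))
  have iS: "\<iota> ` S \<subseteq> carrier G" using assms(6) unfolding is_presentation_def by blast
  have RS: "R \<subseteq> lists (S \<times> UNIV)" using assms(6) unfolding is_presentation_def by blast
  have pres: "\<forall>w \<in> lists (S \<times> UNIV). word_eval G \<iota> w = \<one>\<^bsub>G\<^esub> \<longleftrightarrow> (\<exists>N. has_vk_diagram R w N)"
    using assms(6) unfolding is_presentation_def by blast
  have Hc: "H j \<subseteq> carrier G" if "j \<in> {1..n}" for j
    using assms(7) that subgroup.subset by blast
  have Ssub: "Ssub j \<subseteq> S" if "j \<in> {1..n}" for j using assms(8) that by blast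
  define a where "a = \<iota> s"
  define A where "A = Ssub i"
  have ac: "a \<in> carrier G" using iS assms(11) by (auto simp: a_def)
  have iA: "\<iota> ` A \<subseteq> carrier G" using iS Ssub[OF assms(10)] by (auto simp: A_def)
  have symA: "symmetric_alph G \<iota> A" using assms(8,10) by (simp add: A_def)
  define P :: "('s, 'g) xletter \<Rightarrow> bool" where "P = (\<lambda>x. case x of Sub j h \<Rightarrow> j = i | Gen _ \<Rightarrow> False)"
  define f where "f = (\<lambda>x. real (word_length G \<iota> A (a \<otimes>\<^bsub>G\<^esub> x)))"
  define \<phi> where "\<phi> = (xval \<iota> :: ('s, 'g) xletter \<Rightarrow> 'g)"
  define w :: "(('s, 'g) xletter \<times> bool) list" where "w = [(Gen s, False), (Sub i a, True)]"
  have wl: "w \<in> lists (xletters S n H \<times> UNIV)"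
    using assms(10,11,12) by (auto simp: w_def xletters_def a_def)
  have we: "word_eval G (xval \<iota>) w = \<one>\<^bsub>G\<^esub>"
    using ac by (simp add: w_def word_eval_def a_def[symmetric])
  obtain N where N: "real N \<le> K * real (length w)"
    and vk: "has_vk_diagram (xrelators G \<iota> R n H Ssub) w N"
    using assms(9) wl we unfolding linear_isoperimetric_def by blast
  obtain cs where cs: "length cs \<le> N" "\<forall>(u, r, e) \<in> set cs. r \<in> xrelators G \<iota> R n H Ssub"
    "free_eq w (conj_prod cs)" using vk unfolding has_vk_diagram_def by blast
  have rel: "word_eval G (cval G \<phi>) r = \<one>\<^bsub>G\<^esub> \<and> (\<forall>q\<in>carrier G. \<bar>Lam G \<phi> P f q r\<bar> \<le> 1)"
    if r: "r \<in> xrelators G \<iota> R n H Ssub" for r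
  proof -
    consider (R) r0 where "r0 \<in> R" "r = map (\<lambda>(s, b). (Gen s, b)) r0"
      | (T) j t where "j \<in> {1..n}" "t \<in> Ssub j" "r = [(Sub j (\<iota> t), False), (Gen t, True)]"
      | (Hr) j hs where "j \<in> {1..n}" "hs \<in> lists (H j)" "foldr (\<otimes>\<^bsub>G\<^esub>) hs \<one>\<^bsub>G\<^esub> = \<one>\<^bsub>G\<^esub>"
          "r = map (\<lambda>h. (Sub j h, True)) hs"
      using r unfolding xrelators_def by blast
    then show ?thesis
    proof cases
      case R
      have r0l: "r0 \<in> lists (S \<times> UNIV)" using R RS by blast
      have "has_vk_diagram R r0 1"
        unfolding has_vk_diagram_def
        by (rule exI[where x="[([], r0, True)]"])
           (simp add: R conj_prod_def free_eq_def)
      then have "word_eval G \<iota> r0 = \<one>\<^bsub>G\<^esub>" using pres r0l by blast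
      moreover have "Lam G \<phi> P f q r = 0" for q
        by (rule G.Lam_zero) (auto simp: R P_def)
      ultimately show ?thesis using E_gen[OF assms(1) iS r0l] by (simp add: R \<phi>_def)
    next
      case T
      have tc: "\<iota> t \<in> carrier G" using T Ssub iS by blast
      have cv1: "cval G \<phi> (Sub j (\<iota> t)) = \<iota> t" "cval G \<phi> (Gen t) = \<iota> t"
        using tc by (simp_all add: cval_def \<phi>_def)
      have E: "word_eval G (cval G \<phi>) r = \<one>\<^bsub>G\<^esub>"
        using tc by (simp add: T G.E_Cons lval_def cv1)
      have L: "\<bar>Lam G \<phi> P f q r\<bar> \<le> 1" if q: "q \<in> carrier G" for q
      proof (cases "j = i")
        case True
        have "t \<in> A" using T True by (simp add: A_def)
        have aq: "a \<otimes>\<^bsub>G\<^esub> q \<in> carrier G" using ac q by simp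
        have "a \<otimes>\<^bsub>G\<^esub> (q \<otimes>\<^bsub>G\<^esub> inv\<^bsub>G\<^esub> \<iota> t) = (a \<otimes>\<^bsub>G\<^esub> q) \<otimes>\<^bsub>G\<^esub> inv\<^bsub>G\<^esub> \<iota> t"
          using ac q tc by (simp add: G.m_assoc)
        moreover have "cval G \<phi> (Sub i (\<iota> t)) = \<iota> t" using tc by (simp add: cval_def \<phi>_def)
        ultimately show ?thesis using G.wl_lip[OF iA symA \<open>t \<in> A\<close> aq] q tc True
          by (simp add: T lval_def cv1 P_def f_def)
      next
        case False
        then show ?thesis by (simp add: T P_def)
      qed
      show ?thesis using E L by blast
    next
      case Hr
      have hc: "set hs \<subseteq> carrier G" using Hr Hc by auto
      have E: "word_eval G (cval G \<phi>) r = \<one>\<^bsub>G\<^esub>"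
        using E_sub[OF hc] Hr by (simp add: \<phi>_def)
      have L: "Lam G \<phi> P f q r = 0" if q: "q \<in> carrier G" for q
      proof (cases "j = i")
        case True
        have "Lam G \<phi> P f q r = f (q \<otimes>\<^bsub>G\<^esub> word_eval G (cval G \<phi>) r) - f q"
          by (rule G.Lam_tele[OF q]) (auto simp: Hr True P_def)
        then show ?thesis using E q by simp
      next
        case False
        then show ?thesis by (intro G.Lam_zero) (auto simp: Hr P_def)
      qed
      show ?thesis using E L by simp
    qed
  qed
  have cb: "\<bar>Lam G \<phi> P f \<one>\<^bsub>G\<^esub> (conj_prod cs)\<bar> \<le> real (length cs)"
    using G.conj_bound[of cs \<phi> P f "\<one>\<^bsub>G\<^esub>"] rel cs(2) by fastforce
  have eqL: "Lam G \<phi> P f \<one>\<^bsub>G\<^esub> w = Lam G \<phi> P f \<one>\<^bsub>G\<^esub> (conj_prod cs)"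
    using G.Lam_free_eq[OF cs(3)] by simp
  have cvs: "cval G \<phi> (Gen s) = a" "cval G \<phi> (Sub i a) = a"
    using ac by (simp_all add: cval_def \<phi>_def a_def)
  have f1: "f \<one>\<^bsub>G\<^esub> = real (word_length G \<iota> A a)" using ac by (simp add: f_def)
  have "word_length G \<iota> A (a \<otimes>\<^bsub>G\<^esub> inv\<^bsub>G\<^esub> a) \<le> length ([] :: 's list)"
    by (rule G.wl_le) (use ac in simp_all)
  then have f2: "f (inv\<^bsub>G\<^esub> a) = 0" by (simp add: f_def)
  have "Lam G \<phi> P f \<one>\<^bsub>G\<^esub> w = f \<one>\<^bsub>G\<^esub> - f (inv\<^bsub>G\<^esub> a)"
    using ac by (simp add: w_def lval_def cvs P_def)
  then have "real (word_length G \<iota> A a) \<le> real N"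
    using eqL cb cs(1) f1 f2 by linarith
  moreover have "real N \<le> 2 * K" using N by (simp add: w_def)
  ultimately show ?thesis by (simp add: A_def a_def)
qed

end
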